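(* For every graph $G$ and every integer $k\ge 0$, $\pi^*(G+K_k)=\pi^*(G)+k$.
   Context: All graphs are finite and simple. $A+B$ denotes the complete join of graphs $A$ and $B$: the disjoint union of $A$ and $B$ together with all edges between $V(A)$ and $V(B)$; $K_k$ is the complete graph on $k$ vertices. A lazy walk in a graph $G$ is a sequence of vertices $v_1,\dots,v_m$ such that for each $i<m$, either $v_iv_{i+1}\in E(G)$ or $v_i=v_{i+1}$. For a colouring $\phi$ of $V(G)$, a lazy walk $v_1,\dots,v_{2t}$ is $\phi$-repetitive if $\phi(v_i)=\phi(v_{i+t})$ for each $i\in\{1,\dots,t\}$. A colouring $\phi$ is strongly nonrepetitive if for every $\phi$-repetitive lazy walk $v_1,\dots,v_{2t}$ there exists $i\in\{1,\dots,t\}$ with $v_i=v_{i+t}$. $\pi^*(G)$ denotes the minimum number of colours in a strongly nonrepetitive colouring of $G$. *)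

theory Defs
  imports Main
begin

definition simple_graph :: "'a set \<Rightarrow> ('a \<Rightarrow> 'a \<Rightarrow> bool) \<Rightarrow> bool" where
  "simple_graph V E \<longleftrightarrow> finite V \<and> (\<forall>x y. E x y \<longrightarrow> E y x) \<and> (\<forall>x. \<not> E x x)
     \<and> (\<forall>x y. E x y \<longrightarrow> x \<in> V \<and> y \<in> V)"

text \<open>Lazy walk v_1..v_m (m >= 1), as a nonempty list, 0-indexed.\<close>
definition lazy_walk :: "'a set \<Rightarrow> ('a \<Rightarrow> 'a \<Rightarrow> bool) \<Rightarrow> 'a list \<Rightarrow> bool" where
  "lazy_walk V E ws \<longleftrightarrow> ws \<noteq> [] \<and> set ws \<subseteq> V \<and>
     (\<forall>i. Suc i < length ws \<longrightarrow> E (ws ! i) (ws ! Suc i) \<or> ws ! i = ws ! Suc i)"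

definition repetitive :: "('a \<Rightarrow> 'c) \<Rightarrow> 'a list \<Rightarrow> bool" where
  "repetitive \<phi> ws \<longleftrightarrow> (\<exists>t. t > 0 \<and> length ws = 2 * t \<and>
     (\<forall>i<t. \<phi> (ws ! i) = \<phi> (ws ! (i + t))))"

definition strongly_nonrepetitive :: "'a set \<Rightarrow> ('a \<Rightarrow> 'a \<Rightarrow> bool) \<Rightarrow> ('a \<Rightarrow> 'c) \<Rightarrow> bool" where
  "strongly_nonrepetitive V E \<phi> \<longleftrightarrow>
     (\<forall>ws. lazy_walk V E ws \<and> repetitive \<phi> ws \<longrightarrow>
        (\<exists>i < length ws div 2. ws ! i = ws ! (i + length ws div 2)))"

definition pi_star :: "'a set \<Rightarrow> ('a \<Rightarrow> 'a \<Rightarrow> bool) \<Rightarrow> nat" where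
  "pi_star V E = (LEAST n. \<exists>\<phi> :: 'a \<Rightarrow> nat. strongly_nonrepetitive V E \<phi> \<and> card (\<phi> ` V) = n)"

text \<open>Complete join G + K_k: vertices Inl v (v in V) and Inr i (i < k).\<close>
definition join_V :: "'a set \<Rightarrow> nat \<Rightarrow> ('a + nat) set" where
  "join_V V k = Inl ` V \<union> Inr ` {..<k}"

fun join_E :: "'a set \<Rightarrow> ('a \<Rightarrow> 'a \<Rightarrow> bool) \<Rightarrow> nat \<Rightarrow> ('a + nat) \<Rightarrow> ('a + nat) \<Rightarrow> bool" where
  "join_E V E k (Inl a) (Inl b) = E a b"
| "join_E V E k (Inr i) (Inr j) = (i < k \<and> j < k \<and> i \<noteq> j)"
| "join_E V E k (Inl a) (Inr j) = (a \<in> V \<and> j < k)"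
| "join_E V E k (Inr i) (Inl b) = (i < k \<and> b \<in> V)"

end

theory Submission
  imports Defs
begin

lemma snr_exists:
  assumes "finite W"
  shows "\<exists>\<phi>::'b\<Rightarrow>nat. strongly_nonrepetitive W F \<phi>"
proof -
  obtain f :: "'b \<Rightarrow> nat" and n where f: "inj_on f W"
    using finite_imp_inj_to_nat_seg[OF assms] by blast
  have "strongly_nonrepetitive W F f"
    unfolding strongly_nonrepetitive_def
  proof (intro allI impI)
    fix ws assume h: "lazy_walk W F ws \<and> repetitive f ws"
    then obtain t where t: "t > 0" "length ws = 2*t" "\<forall>i<t. f (ws!i) = f (ws!(i+t))"
      unfolding repetitive_def by blast
    have s: "set ws \<subseteq> W" using h unfolding lazy_walk_def by blast
    have "ws!0 \<in> W" "ws!(0+t) \<in> W" using s t nth_mem[of 0 ws] nth_mem[of "0+t" ws] by auto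
    then have "ws!0 = ws!(0+t)" using t f by (meson inj_onD)
    then show "\<exists>i<length ws div 2. ws ! i = ws ! (i + length ws div 2)"
      using t by (intro exI[of _ 0]) auto
  qed
  then show ?thesis by blast
qed

lemma pi_star_le:
  "strongly_nonrepetitive W F (\<phi>::'b\<Rightarrow>nat) \<Longrightarrow> pi_star W F \<le> card (\<phi> ` W)"
proof -
  assume a: "strongly_nonrepetitive W F \<phi>"
  show ?thesis unfolding pi_star_def
    by (rule Least_le, rule exI[of _ \<phi>], rule conjI[OF a refl])
qed

lemma pi_star_obtain:
  assumes "finite W"
  shows "\<exists>\<phi>::'b\<Rightarrow>nat. strongly_nonrepetitive W F \<phi> \<and> card (\<phi>`W) = pi_star W F"
proof -
  obtain \<phi> :: "'b\<Rightarrow>nat" where "strongly_nonrepetitive W F \<phi>" using snr_exists[OF assms] by blast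
  then have "\<exists>n \<phi>::'b\<Rightarrow>nat. strongly_nonrepetitive W F \<phi> \<and> card (\<phi> ` W) = n" by blast
  from LeastI_ex[OF this] show ?thesis unfolding pi_star_def by blast
qed

lemma adj_distinct:
  assumes "strongly_nonrepetitive W F \<psi>" "x \<in> W" "y \<in> W" "F x y" "x \<noteq> y"
  shows "\<psi> x \<noteq> \<psi> y"
proof
  assume eq: "\<psi> x = \<psi> y"
  have "lazy_walk W F [x,y]" unfolding lazy_walk_def using assms
    by (auto simp: less_Suc_eq)
  moreover have "repetitive \<psi> [x,y]" unfolding repetitive_def using eq
    by (intro exI[of _ 1]) auto
  ultimately have "\<exists>i<length [x,y] div 2. [x,y] ! i = [x,y] ! (i + length [x,y] div 2)"
    using assms(1) unfolding strongly_nonrepetitive_def by blast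
  then show False using assms(5) by auto
qed

theorem mainTheorem9:
  fixes V :: "'a set" and E :: "'a \<Rightarrow> 'a \<Rightarrow> bool" and k :: nat
  assumes "simple_graph V E"
  shows "pi_star (join_V V k) (join_E V E k) = pi_star V E + k"
proof -
  have finV: "finite V" using assms unfolding simple_graph_def by blast
  have finJ: "finite (join_V V k)" using finV unfolding join_V_def by blast
  have disjJ: "Inl ` V \<inter> Inr ` {..<k} = {}" by blast
  obtain \<phi> :: "'a \<Rightarrow> nat" where \<phi>: "strongly_nonrepetitive V E \<phi>" "card (\<phi>`V) = pi_star V E"
    using pi_star_obtain[OF finV] by blast
  define \<psi> :: "'a + nat \<Rightarrow> nat" where "\<psi> = (\<lambda>x. case x of Inl a \<Rightarrow> 2 * \<phi> a | Inr i \<Rightarrow> 2*i+1)"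
  have psiodd: "\<psi> x = 2*r+1 \<Longrightarrow> x = Inr r" for x r
  proof (cases x)
    case (Inl a)
    assume "\<psi> x = 2*r+1"
    then have "2 * \<phi> a = 2*r+1" using Inl by (simp add: \<psi>_def)
    then have False by presburger
    then show ?thesis ..
  next
    case (Inr i)
    assume "\<psi> x = 2*r+1"
    then show ?thesis using Inr by (simp add: \<psi>_def)
  qed
  have snr: "strongly_nonrepetitive (join_V V k) (join_E V E k) \<psi>"
    unfolding strongly_nonrepetitive_def
  proof (intro allI impI)
    fix ws assume h: "lazy_walk (join_V V k) (join_E V E k) ws \<and> repetitive \<psi> ws"
    then obtain t where t: "t > 0" "length ws = 2*t" "\<forall>i<t. \<psi> (ws!i) = \<psi> (ws!(i+t))"
      unfolding repetitive_def by blast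
    have ld: "length ws div 2 = t" using t by simp
    show "\<exists>i<length ws div 2. ws ! i = ws ! (i + length ws div 2)"
    proof (cases "\<exists>j<2*t. \<exists>r. ws!j = Inr r")
      case True
      then obtain j r where j: "j < 2*t" "ws!j = Inr r" by blast
      show ?thesis
      proof (cases "j < t")
        case True
        have "\<psi> (ws!j) = \<psi> (ws!(j+t))" using t(3) True by blast
        then have "\<psi> (ws!(j+t)) = 2*r+1" using j by (simp add: \<psi>_def)
        then have "ws!(j+t) = Inr r" by (rule psiodd)
        then show ?thesis using True j ld by auto
      next
        case False
        have "\<psi> (ws!(j-t)) = \<psi> (ws!(j-t+t))" using t(3) False j by simp
        also have "j - t + t = j" using False by simp
        finally have "\<psi> (ws!(j-t)) = 2*r+1" using j by (simp add: \<psi>_def)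
        then have "ws!(j-t) = Inr r" by (rule psiodd)
        then show ?thesis using False j ld by (intro exI[of _ "j-t"]) auto
      qed
    next
      case False
      have allL: "\<forall>j<length ws. ws!j = Inl (projl (ws!j))"
      proof (intro allI impI)
        fix j assume "j < length ws"
        then have "\<not> (\<exists>r. ws!j = Inr r)" using False t(2) by auto
        then show "ws!j = Inl (projl (ws!j))" by (cases "ws!j") auto
      qed
      define vs where "vs = map projl ws"
      have wsv: "ws = map Inl vs" unfolding vs_def
        by (rule nth_equalityI) (use allL in auto)
      have lw: "lazy_walk (join_V V k) (join_E V E k) (map Inl vs)" using h wsv by simp
      have "lazy_walk V E vs" unfolding lazy_walk_def
      proof (intro conjI allI impI)
        show "vs \<noteq> []" using lw unfolding lazy_walk_def by auto
        show "set vs \<subseteq> V" using lw unfolding lazy_walk_def join_V_def by auto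
        fix i assume "Suc i < length vs"
        then show "E (vs ! i) (vs ! Suc i) \<or> vs ! i = vs ! Suc i"
          using lw unfolding lazy_walk_def by auto
      qed
      moreover have "repetitive \<phi> vs" unfolding repetitive_def
        using t wsv by (intro exI[of _ t]) (auto simp: \<psi>_def)
      ultimately obtain i where "i < length vs div 2" "vs!i = vs!(i + length vs div 2)"
        using \<phi>(1) unfolding strongly_nonrepetitive_def by blast
      then show ?thesis using wsv by (intro exI[of _ i]) auto
    qed
  qed
  have imgpsi: "\<psi> ` join_V V k = (\<lambda>x. 2*x) ` (\<phi> ` V) \<union> (\<lambda>i. 2*i+1) ` {..<k}"
    unfolding join_V_def image_Un image_image by (simp add: \<psi>_def)
  have "card (\<psi> ` join_V V k) = card ((\<lambda>x. 2*x) ` (\<phi> ` V)) + card ((\<lambda>i. 2*i+1) ` {..<k})"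
  proof -
    have d: "2*x \<noteq> 2*i+(1::nat)" for x i by presburger
    show ?thesis unfolding imgpsi using finV d by (intro card_Un_disjoint) auto
  qed
  also have "\<dots> = card (\<phi> ` V) + k"
  proof -
    have "card ((\<lambda>x. 2*x) ` (\<phi> ` V)) = card (\<phi> ` V)" by (rule card_image) (simp add: inj_on_def)
    moreover have "card ((\<lambda>i. 2*i+1) ` {..<k}) = card {..<k}" by (rule card_image) (simp add: inj_on_def)
    ultimately show ?thesis by simp
  qed
  finally have up: "pi_star (join_V V k) (join_E V E k) \<le> pi_star V E + k"
    using pi_star_le[OF snr] \<phi>(2) by simp
  obtain \<chi> :: "'a + nat \<Rightarrow> nat" where \<chi>: "strongly_nonrepetitive (join_V V k) (join_E V E k) \<chi>"
     "card (\<chi> ` join_V V k) = pi_star (join_V V k) (join_E V E k)"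
    using pi_star_obtain[OF finJ] by blast
  define \<phi>' where "\<phi>' = (\<lambda>a. \<chi> (Inl a))"
  have snr2: "strongly_nonrepetitive V E \<phi>'"
    unfolding strongly_nonrepetitive_def
  proof (intro allI impI)
    fix vs assume h: "lazy_walk V E vs \<and> repetitive \<phi>' vs"
    have "lazy_walk (join_V V k) (join_E V E k) (map Inl vs)"
      using h unfolding lazy_walk_def join_V_def by auto
    moreover have "repetitive \<chi> (map Inl vs)"
      using h unfolding repetitive_def \<phi>'_def by auto
    ultimately have "\<exists>i<length (map Inl vs :: ('a+nat) list) div 2. (map Inl vs :: ('a+nat) list) ! i = (map Inl vs :: ('a+nat) list) ! (i + length (map Inl vs :: ('a+nat) list) div 2)"
      using \<chi>(1)[unfolded strongly_nonrepetitive_def, rule_format, of "map Inl vs"] by blast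
    then show "\<exists>i<length vs div 2. vs ! i = vs ! (i + length vs div 2)" by auto
  qed
  have dom: "\<chi> (Inr i) \<noteq> \<chi> x" if "i < k" "x \<in> join_V V k" "x \<noteq> Inr i" for i x
  proof -
    have "join_E V E k (Inr i) x" using that unfolding join_V_def by auto
    moreover have "Inr i \<in> join_V V k" using that unfolding join_V_def by auto
    moreover have "Inr i \<noteq> x" using that(3) by simp
    ultimately show ?thesis using adj_distinct[OF \<chi>(1) _ that(2)] by blast
  qed
  have "\<chi> ` join_V V k = \<phi>' ` V \<union> \<chi> ` (Inr ` {..<k})"
    unfolding join_V_def image_Un \<phi>'_def by auto
  moreover have "\<phi>' ` V \<inter> \<chi> ` (Inr ` {..<k}) = {}"
  proof -
    { fix a i assume "a \<in> V" "i < k" "\<chi> (Inl a) = \<chi> (Inr i)"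
      with dom[of i "Inl a"] have False unfolding join_V_def by auto }
    then show ?thesis unfolding \<phi>'_def by auto
  qed
  moreover have "inj_on \<chi> (Inr ` {..<k})"
  proof (rule inj_onI)
    fix x y assume x: "x \<in> Inr ` {..<k}" and y: "y \<in> Inr ` {..<k}" and e: "\<chi> x = \<chi> y"
    from x obtain i where i: "i < k" "x = Inr i" by blast
    have "y \<in> join_V V k" using y unfolding join_V_def by blast
    then show "x = y" using dom[OF i(1) _] e i(2) by metis
  qed
  ultimately have "card (\<chi> ` join_V V k) = card (\<phi>' ` V) + card (\<chi> ` (Inr ` {..<k}))"
    using finV by (simp add: card_Un_disjoint)
  moreover have "card (\<chi> ` (Inr ` {..<k})) = card (Inr ` {..<k} :: ('a+nat) set)"
    by (rule card_image) fact
  moreover have "card (Inr ` {..<k} :: ('a+nat) set) = k"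
    by (subst card_image) (auto simp: inj_on_def)
  ultimately have "card (\<chi> ` join_V V k) = card (\<phi>' ` V) + k" by simp
  then have "pi_star V E + k \<le> pi_star (join_V V k) (join_E V E k)"
    using pi_star_le[OF snr2] \<chi>(2) by simp
  with up show ?thesis by simp
qed

end
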